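(* Let $a_1,b_1>0$ and $\alpha>0$ with $\alpha\neq 1$, and set $a_2=\alpha a_1$, $b_2=\alpha b_1$ (so that $p_2=\alpha p_1$). Then, with $C_1,C_2$ as defined in the context, $\sup_{\omega\ge0}|C_1(j\omega)C_2(j\omega)|<1$.
   Context: For constants $a_1,b_1,a_2,b_2>0$ and complex $s$, set $p_1(s)=a_1+b_1 s$, $p_2(s)=a_2+b_2 s$, $q=p_1+p_2$, and $m(s)=(s^2+q)\sqrt{1-\frac{4p_1p_2}{(s^2+q)^2}}$ with $\sqrt{\cdot}$ the principal complex square root (nonnegative real part), so $m^2=(s^2+q)^2-4p_1p_2$. Define $C_1=\frac{(s^2+q)-m}{2p_2}$ and $C_2=\frac{(s^2+q)-m}{2p_1}$. $j$ denotes the imaginary unit. *)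

theory Defs
  imports Complex_Main
begin

definition pf :: "real \<Rightarrow> real \<Rightarrow> complex \<Rightarrow> complex" where
  "pf a b s = complex_of_real a + complex_of_real b * s"

definition qf :: "real \<Rightarrow> real \<Rightarrow> real \<Rightarrow> real \<Rightarrow> complex \<Rightarrow> complex" where
  "qf a1 b1 a2 b2 s = pf a1 b1 s + pf a2 b2 s"

definition mf :: "real \<Rightarrow> real \<Rightarrow> real \<Rightarrow> real \<Rightarrow> complex \<Rightarrow> complex" where
  "mf a1 b1 a2 b2 s = (s^2 + qf a1 b1 a2 b2 s) *
     csqrt (1 - 4 * pf a1 b1 s * pf a2 b2 s / (s^2 + qf a1 b1 a2 b2 s)^2)"

definition C1 :: "real \<Rightarrow> real \<Rightarrow> real \<Rightarrow> real \<Rightarrow> complex \<Rightarrow> complex" where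
  "C1 a1 b1 a2 b2 s = ((s^2 + qf a1 b1 a2 b2 s) - mf a1 b1 a2 b2 s) / (2 * pf a2 b2 s)"

definition C2 :: "real \<Rightarrow> real \<Rightarrow> real \<Rightarrow> real \<Rightarrow> complex \<Rightarrow> complex" where
  "C2 a1 b1 a2 b2 s = ((s^2 + qf a1 b1 a2 b2 s) - mf a1 b1 a2 b2 s) / (2 * pf a1 b1 s)"

end

theory Submission imports Defs "HOL-Analysis.Analysis" begin


lemma algA:
  fixes P S t :: complex and \<alpha> :: real
  assumes "\<alpha> > 0" "P \<noteq> 0" "S \<noteq> 0" "t^2 = 1 - 4 * P * (of_real \<alpha> * P) / S^2"
  shows "((S - S*t)/(2*(of_real \<alpha> * P))) * ((S - S*t)/(2*P)) = (1-t)/(1+t)"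
proof -
  have a: "of_real \<alpha> \<noteq> (0::complex)" using assms by simp
  have w: "4 * P * (of_real \<alpha> * P) / S^2 \<noteq> 0" using assms a by simp
  have t1: "1 - t \<noteq> 0" using assms w by auto
  have t2: "1 + t \<noteq> 0"
  proof
    assume "1 + t = 0" then have "t = -1" by (simp add: add_eq_0_iff)
    then show False using assms w by auto
  qed
  have e0: "(1-t)*(1+t) = 4 * P * (of_real \<alpha> * P) / S^2" using assms(4)
    by (simp add: algebra_simps power2_eq_square)
  have "((S - S*t)/(2*(of_real \<alpha> * P))) * ((S - S*t)/(2*P)) = (1-t)^2 / (4 * P * (of_real \<alpha> * P) / S^2)"
    using a assms(2,3) by (simp add: field_simps power2_eq_square)
  also have "\<dots> = (1-t)^2 / ((1-t)*(1+t))" by (simp add: e0)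
  also have "\<dots> = (1-t)/(1+t)" using t1 t2 by (simp add: power2_eq_square)
  finally show ?thesis .
qed

lemma normB:
  fixes t :: complex assumes "Re t > 0"
  shows "cmod ((1-t)/(1+t)) < 1"
proof -
  have "cmod (1-t)^2 = (1 - Re t)^2 + (Im t)^2" by (simp add: cmod_power2)
  moreover have "cmod (1+t)^2 = (1 + Re t)^2 + (Im t)^2" by (simp add: cmod_power2)
  ultimately have "cmod (1-t)^2 < cmod (1+t)^2" using assms
    by (simp add: power2_eq_square algebra_simps)
  then have "cmod (1-t) < cmod (1+t)" by (simp add: power_less_imp_less_base)
  moreover have "1 + t \<noteq> 0" using assms by (auto simp: complex_eq_iff)
  ultimately show ?thesis by (simp add: norm_divide divide_less_eq)
qed

lemma normC:
  fixes t w :: complex assumes "Re t \<ge> 0" "t^2 = 1 - w"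
  shows "cmod ((1-t)/(1+t)) \<le> cmod w"
proof -
  have n: "cmod (1+t) \<ge> 1" using assms(1) complex_Re_le_cmod[of "1+t"] by simp
  then have nz: "1 + t \<noteq> 0" by auto
  have ww: "(1-t)*(1+t) = w" using assms(2) by (simp add: algebra_simps power2_eq_square)
  have "(1-t)/(1+t) = ((1-t)*(1+t))/(1+t)^2" using nz by (simp add: power2_eq_square)
  then have "(1-t)/(1+t) = w/(1+t)^2" using ww by simp
  then have "cmod ((1-t)/(1+t)) = cmod w / cmod (1+t)^2" by (simp add: norm_divide norm_power)
  also have "\<dots> \<le> cmod w"
  proof -
    have "cmod (1+t)^2 \<ge> 1" using n by (simp add: one_le_power)
    then show ?thesis by (simp add: divide_le_eq mult_le_cancel_left1)
  qed
  finally show ?thesis .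
qed

lemma reD:
  assumes "z \<notin> \<real>\<^sub>\<le>\<^sub>0" shows "Re (csqrt z) > 0"
proof (rule ccontr)
  assume "\<not> Re (csqrt z) > 0"
  then have r: "Re (csqrt z) = 0" using Re_csqrt[of z] by simp
  have z: "z = (csqrt z)^2" by simp
  have "Re ((csqrt z)^2) = - (Im (csqrt z) * Im (csqrt z))" using r by (simp add: power2_eq_square)
  moreover have "Im ((csqrt z)^2) = 0" using r by (simp add: power2_eq_square)
  ultimately have "Re z \<le> 0" "Im z = 0" using z by (metis neg_le_0_iff_le zero_le_square)+
  then show False using assms by (simp add: complex_nonpos_Reals_iff)
qed



definition PP :: "real \<Rightarrow> real \<Rightarrow> real \<Rightarrow> complex" where
  "PP a1 b1 \<omega> = of_real a1 + of_real b1 * (\<i> * of_real \<omega>)"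
definition SS :: "real \<Rightarrow> real \<Rightarrow> real \<Rightarrow> real \<Rightarrow> complex" where
  "SS a1 b1 \<alpha> \<omega> = (\<i> * of_real \<omega>)^2 + (1 + of_real \<alpha>) * PP a1 b1 \<omega>"
definition WW :: "real \<Rightarrow> real \<Rightarrow> real \<Rightarrow> real \<Rightarrow> complex" where
  "WW a1 b1 \<alpha> \<omega> = 4 * PP a1 b1 \<omega> * (of_real \<alpha> * PP a1 b1 \<omega>) / (SS a1 b1 \<alpha> \<omega>)^2"

lemma PP_ne: "a1 > 0 \<Longrightarrow> PP a1 b1 \<omega> \<noteq> 0"
  by (auto simp: PP_def complex_eq_iff)

lemma SS_ne: "a1 > 0 \<Longrightarrow> b1 > 0 \<Longrightarrow> \<alpha> > 0 \<Longrightarrow> SS a1 b1 \<alpha> \<omega> \<noteq> 0"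
proof
  assume a: "a1 > 0" "b1 > 0" "\<alpha> > 0" "SS a1 b1 \<alpha> \<omega> = 0"
  have "Im (SS a1 b1 \<alpha> \<omega>) = (1+\<alpha>)*b1*\<omega>" by (simp add: SS_def PP_def power2_eq_square algebra_simps)
  then have "\<omega> = 0" using a by simp
  moreover have "Re (SS a1 b1 \<alpha> \<omega>) = (1+\<alpha>)*a1 - \<omega>^2" by (simp add: SS_def PP_def power2_eq_square algebra_simps)
  ultimately show False using a by (simp add: add_pos_pos)
qed

lemma Im_r: "a1 > 0 \<Longrightarrow> Im (SS a1 b1 \<alpha> \<omega> / PP a1 b1 \<omega>) = b1 * \<omega>^3 / (a1^2 + b1^2*\<omega>^2)"
proof -
  assume a: "a1 > 0"
  have p: "PP a1 b1 \<omega> \<noteq> 0" using PP_ne a .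
  have "SS a1 b1 \<alpha> \<omega> / PP a1 b1 \<omega> = (1 + of_real \<alpha>) - of_real (\<omega>^2) / PP a1 b1 \<omega>"
    using p by (simp add: SS_def field_simps power2_eq_square)
  moreover have "Im (of_real (\<omega>^2) / PP a1 b1 \<omega>) = - (\<omega>^2 * (b1*\<omega>)) / (a1^2 + b1^2*\<omega>^2)"
    by (simp add: PP_def Im_divide power2_eq_square algebra_simps)
  ultimately show ?thesis by (simp add: power3_eq_cube power2_eq_square)
qed



lemma WW_r: "a1 > 0 \<Longrightarrow> b1 > 0 \<Longrightarrow> \<alpha> > 0 \<Longrightarrow>
   WW a1 b1 \<alpha> \<omega> * (SS a1 b1 \<alpha> \<omega> / PP a1 b1 \<omega>)^2 = of_real (4*\<alpha>)"
  using PP_ne[of a1 b1 \<omega>] SS_ne[of a1 b1 \<alpha> \<omega>]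
  by (simp add: WW_def field_simps power2_eq_square)

lemma notnp:
  assumes "a1 > 0" "b1 > 0" "\<alpha> > 0" "\<alpha> \<noteq> 1"
  shows "1 - WW a1 b1 \<alpha> \<omega> \<notin> \<real>\<^sub>\<le>\<^sub>0"
proof
  assume "1 - WW a1 b1 \<alpha> \<omega> \<in> \<real>\<^sub>\<le>\<^sub>0"
  then have i: "Im (WW a1 b1 \<alpha> \<omega>) = 0" and w1: "Re (WW a1 b1 \<alpha> \<omega>) \<ge> 1"
    by (auto simp: complex_nonpos_Reals_iff)
  define w where "w = Re (WW a1 b1 \<alpha> \<omega>)"
  define r where "r = SS a1 b1 \<alpha> \<omega> / PP a1 b1 \<omega>"
  have W: "WW a1 b1 \<alpha> \<omega> = of_real w" using i by (simp add: w_def complex_eq_iff)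
  have e: "of_real w * r^2 = of_real (4*\<alpha>)" using WW_r[OF assms(1-3), of \<omega>] W r_def by simp
  have e1: "w * (Re r * Re r - Im r * Im r) = 4*\<alpha>"
    using arg_cong[OF e, of Re] by (simp add: power2_eq_square)
  have e2: "w * (2 * Re r * Im r) = 0"
    using arg_cong[OF e, of Im] by (simp add: power2_eq_square algebra_simps)
  have wpos: "w \<ge> 1" using w1 w_def by simp
  show False
  proof (cases "\<omega> = 0")
    case True
    have "r = 1 + of_real \<alpha>" using True PP_ne[OF assms(1), of b1 \<omega>]
      by (simp add: r_def SS_def)
    then have "w * ((1+\<alpha>)*(1+\<alpha>)) = 4*\<alpha>" using e1 by simp
    then have "(1+\<alpha>)*(1+\<alpha>) \<le> 4*\<alpha>" using wpos assms(3)
      by (smt (verit) mult_le_cancel_right1 zero_le_square)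
    then have "(\<alpha> - 1)*(\<alpha> - 1) \<le> 0" by (simp add: algebra_simps)
    then show False using assms(4) by (smt (verit) zero_le_square mult_eq_0_iff)
  next
    case False
    have "Im r = b1 * \<omega>^3 / (a1^2 + b1^2*\<omega>^2)" using Im_r[OF assms(1)] r_def by simp
    moreover have "a1^2 + b1^2*\<omega>^2 > 0" using assms(1) by (simp add: add_pos_nonneg)
    ultimately have "Im r \<noteq> 0" using False assms(2) by simp
    then have "Re r = 0" using e2 wpos by simp
    then have "- (w * (Im r * Im r)) = 4 * \<alpha>" using e1 by simp
    moreover have "w * (Im r * Im r) \<ge> 0" using wpos by simp
    ultimately show False using assms(3) by simp
  qed
qed



lemma link:
  assumes "a1 > 0" "b1 > 0" "\<alpha> > 0"
  shows "C1 a1 b1 (\<alpha> * a1) (\<alpha> * b1) (\<i> * complex_of_real \<omega>)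
       * C2 a1 b1 (\<alpha> * a1) (\<alpha> * b1) (\<i> * complex_of_real \<omega>)
       = (1 - csqrt (1 - WW a1 b1 \<alpha> \<omega>)) / (1 + csqrt (1 - WW a1 b1 \<alpha> \<omega>))"
proof -
  let ?s = "\<i> * complex_of_real \<omega>"
  have p1: "pf a1 b1 ?s = PP a1 b1 \<omega>" by (simp add: pf_def PP_def)
  have p2: "pf (\<alpha>*a1) (\<alpha>*b1) ?s = of_real \<alpha> * PP a1 b1 \<omega>" by (simp add: pf_def PP_def algebra_simps)
  have q: "?s^2 + qf a1 b1 (\<alpha>*a1) (\<alpha>*b1) ?s = SS a1 b1 \<alpha> \<omega>"
    by (simp add: qf_def p1 p2 SS_def algebra_simps)
  have m: "mf a1 b1 (\<alpha>*a1) (\<alpha>*b1) ?s = SS a1 b1 \<alpha> \<omega> * csqrt (1 - WW a1 b1 \<alpha> \<omega>)"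
    unfolding mf_def q p1 p2 WW_def by simp
  show ?thesis unfolding C1_def C2_def q m p1 p2
    by (rule algA[OF assms(3) PP_ne[OF assms(1)] SS_ne[OF assms]]) (simp add: WW_def)
qed

lemma large:
  assumes "a1 > 0" "b1 > 0" "\<alpha> > 0" "\<omega> \<ge> 1" "\<omega> \<ge> 3*(\<alpha>+1)*(a1^2+b1^2)/b1"
  shows "cmod (WW a1 b1 \<alpha> \<omega>) \<le> 1/2"
proof -
  define r where "r = SS a1 b1 \<alpha> \<omega> / PP a1 b1 \<omega>"
  have d: "a1^2 + b1^2*\<omega>^2 > 0" using assms(1) by (simp add: add_pos_nonneg)
  have ir: "Im r = b1 * \<omega>^3 / (a1^2 + b1^2*\<omega>^2)" using Im_r[OF assms(1)] r_def by simp
  have "b1 * \<omega> / (a1^2+b1^2) \<le> b1 * \<omega>^3 / (a1^2 + b1^2*\<omega>^2)"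
  proof -
    have "\<omega>^2 \<ge> 1" using assms(4) by (simp add: one_le_power)
    then have "a1^2 \<le> a1^2 * \<omega>^2" using mult_left_mono[of 1 "\<omega>^2" "a1^2"] by simp
    then have h: "b1*\<omega>*a1^2 \<le> b1*\<omega>*(a1^2*\<omega>^2)"
      using assms(2,4) by (intro mult_left_mono) auto
    have "b1*\<omega>*(a1^2 + b1^2*\<omega>^2) = b1*\<omega>*a1^2 + b1^3*\<omega>^3"
      by (simp add: power2_eq_square power3_eq_cube algebra_simps)
    moreover have "b1*\<omega>^3*(a1^2+b1^2) = b1*\<omega>*(a1^2*\<omega>^2) + b1^3*\<omega>^3"
      by (simp add: power2_eq_square power3_eq_cube algebra_simps)
    ultimately have "b1*\<omega>*(a1^2 + b1^2*\<omega>^2) \<le> b1*\<omega>^3*(a1^2+b1^2)" using h by linarith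
    moreover have "a1^2+b1^2 > 0" using assms(1) by (simp add: add_pos_nonneg)
    ultimately show ?thesis using d by (simp add: field_simps)
  qed
  moreover have "3*(\<alpha>+1) \<le> b1 * \<omega> / (a1^2+b1^2)"
  proof -
    have n: "a1^2+b1^2 > 0" using assms(1) by (simp add: add_pos_nonneg)
    have "3*(\<alpha>+1)*(a1^2+b1^2) \<le> \<omega> * b1" using assms(5) assms(2) by (simp add: pos_divide_le_eq)
    then show ?thesis using n by (simp add: pos_le_divide_eq mult.commute)
  qed
  ultimately have i3: "3*(\<alpha>+1) \<le> Im r" using ir by linarith
  have "cmod r \<ge> 3*(\<alpha>+1)" using i3 abs_Im_le_cmod[of r] by linarith
  then have cr: "cmod r ^2 \<ge> 9*(\<alpha>+1)^2" using assms(3)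
  proof -
    have "(3*(\<alpha>+1))^2 \<le> cmod r ^2" using power_mono[of "3*(\<alpha>+1)" "cmod r" 2] assms(3) \<open>cmod r \<ge> 3*(\<alpha>+1)\<close> by simp
    moreover have "(3*(\<alpha>+1))^2 = 9*(\<alpha>+1)^2" by (simp add: power2_eq_square algebra_simps)
    ultimately show ?thesis by simp
  qed
  have k1: "cmod (WW a1 b1 \<alpha> \<omega>) * cmod r ^2 = 4*\<alpha>"
    using arg_cong[OF WW_r[OF assms(1-3), of \<omega>], of cmod] assms(3) r_def by (simp add: norm_mult norm_power)
  have k2: "4*\<alpha> \<le> 1/2 * (9*(\<alpha>+1)^2)" using assms(3)
  proof -
    have "(\<alpha>+1)^2 = (\<alpha>-1)^2 + 4*\<alpha>" by (simp add: power2_eq_square algebra_simps)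
    moreover have "(\<alpha>-1)^2 \<ge> 0" by simp
    ultimately show ?thesis using assms(3) by linarith
  qed
  show ?thesis
  proof -
    have n9: "9*(\<alpha>+1)^2 > 0" using assms(3) by (simp add: add_pos_pos)
    have cp: "cmod r ^2 > 0" using cr n9 by linarith
    have "cmod (WW a1 b1 \<alpha> \<omega>) * cmod r ^2 \<le> 1/2 * cmod r ^2" using k1 k2 cr by linarith
    then show ?thesis using cp by (simp add: mult_le_cancel_right_pos)
  qed
qed



theorem lemma2:
  fixes a1 b1 \<alpha> :: real
  assumes "a1 > 0" and "b1 > 0" and "\<alpha> > 0" and "\<alpha> \<noteq> 1"
  shows "bdd_above ((\<lambda>\<omega>. cmod (C1 a1 b1 (\<alpha> * a1) (\<alpha> * b1) (\<i> * complex_of_real \<omega>)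
                                 * C2 a1 b1 (\<alpha> * a1) (\<alpha> * b1) (\<i> * complex_of_real \<omega>))) ` {0::real..})
       \<and> (SUP \<omega>\<in>{0::real..}. cmod (C1 a1 b1 (\<alpha> * a1) (\<alpha> * b1) (\<i> * complex_of_real \<omega>)
                                 * C2 a1 b1 (\<alpha> * a1) (\<alpha> * b1) (\<i> * complex_of_real \<omega>))) < 1"
proof -
  define T where "T = (\<lambda>\<omega>. csqrt (1 - WW a1 b1 \<alpha> \<omega>))"
  define G where "G = (\<lambda>\<omega>. cmod ((1 - T \<omega>) / (1 + T \<omega>)))"
  have FG: "\<And>\<omega>. cmod (C1 a1 b1 (\<alpha> * a1) (\<alpha> * b1) (\<i> * complex_of_real \<omega>)
                                 * C2 a1 b1 (\<alpha> * a1) (\<alpha> * b1) (\<i> * complex_of_real \<omega>)) = G \<omega>"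
    using link[OF assms(1-3)] by (simp add: G_def T_def)
  have reT: "\<And>\<omega>. Re (T \<omega>) > 0" unfolding T_def by (rule reD[OF notnp[OF assms]])
  have Glt: "\<And>\<omega>. G \<omega> < 1" unfolding G_def using reT normB by blast
  define R where "R = max 1 (3*(\<alpha>+1)*(a1^2+b1^2)/b1)"
  have Gle: "\<And>\<omega>. \<omega> \<ge> R \<Longrightarrow> G \<omega> \<le> 1/2"
  proof -
    fix \<omega> :: real assume "\<omega> \<ge> R"
    then have "\<omega> \<ge> 1" "\<omega> \<ge> 3*(\<alpha>+1)*(a1^2+b1^2)/b1" by (auto simp: R_def)
    then have l: "cmod (WW a1 b1 \<alpha> \<omega>) \<le> 1/2" using large[OF assms(1-3)] by blast
    have "G \<omega> \<le> cmod (WW a1 b1 \<alpha> \<omega>)" unfolding G_def T_def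
      by (rule normC[OF Re_csqrt power2_csqrt])
    then show "G \<omega> \<le> 1/2" using l by linarith
  qed
  have contP: "\<And>\<omega>. isCont (PP a1 b1) \<omega>" unfolding PP_def[abs_def] by (intro continuous_intros)
  have contS: "\<And>\<omega>. isCont (SS a1 b1 \<alpha>) \<omega>" unfolding SS_def[abs_def] using contP
    by (intro continuous_intros) auto
  have contW: "\<And>\<omega>. isCont (WW a1 b1 \<alpha>) \<omega>" unfolding WW_def[abs_def] using contP contS SS_ne[OF assms(1-3)]
    by (intro continuous_intros) auto
  have contT: "\<And>\<omega>. isCont T \<omega>" unfolding T_def
    by (rule isCont_csqrt') (use contW notnp[OF assms] in \<open>auto intro!: continuous_intros\<close>)
  have contG: "\<And>\<omega>. isCont G \<omega>" unfolding G_def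
  proof -
    fix \<omega>
    have "1 + T \<omega> \<noteq> 0" using reT[of \<omega>] by (auto simp: complex_eq_iff)
    then show "isCont (\<lambda>\<omega>. cmod ((1 - T \<omega>) / (1 + T \<omega>))) \<omega>" using contT
      by (intro continuous_intros) auto
  qed
  have "continuous_on {0..R} G" by (intro continuous_at_imp_continuous_on) (use contG in auto)
  moreover have "{0..R} \<noteq> {}" by (auto simp: R_def)
  ultimately obtain x0 where x0: "x0 \<in> {0..R}" "\<And>y. y \<in> {0..R} \<Longrightarrow> G y \<le> G x0"
    using continuous_attains_sup[of "{0..R}" G] by auto
  define B where "B = max (G x0) (1/2)"
  have bnd: "\<And>\<omega>. \<omega> \<in> {0..} \<Longrightarrow> G \<omega> \<le> B"
  proof -
    fix \<omega> :: real assume "\<omega> \<in> {0..}"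
    then show "G \<omega> \<le> B"
      using x0(2)[of \<omega>] Gle[of \<omega>] by (cases "\<omega> \<le> R") (auto simp: B_def)
  qed
  have B1: "B < 1" using Glt[of x0] by (simp add: B_def)
  show ?thesis unfolding FG
  proof
    show "bdd_above (G ` {0..})" using bnd by (intro bdd_aboveI2[where M=B]) auto
    have "(SUP \<omega>\<in>{0::real..}. G \<omega>) \<le> B" by (rule cSUP_least) (use bnd in auto)
    then show "(SUP \<omega>\<in>{0::real..}. G \<omega>) < 1" using B1 by linarith
  qed
qed


end
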